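(* Let $\beta$ be a distortion risk measure that is neither the mean $\mathbb{E}$ nor an affine function of the mean. Then recursively applying the risk-sensitive Bellman optimality operator $\mathcal{T}^*_\beta$ with respect to $\beta$, i.e. forming $Z_{k+1}=\mathcal{T}^*_\beta Z_k$ from an arbitrary initial value distribution $Z_0$, does not (in general) solve the RSRL objective, and $\beta[Z_k]$ is not guaranteed to converge to $\beta[Z^*]$. In particular, the inequality $\|\beta[\mathcal{T}^*_\beta Z_1]-\beta[\mathcal{T}^*_\beta Z_2]\|_\infty\le\gamma\|\beta[Z_1]-\beta[Z_2]\|_\infty$ is not guaranteed to hold for all value distributions $Z_1,Z_2$.
   Context: Consider an MDP with state space $\mathcal{S}$, action space $\mathcal{A}$, deterministic transition map $M:\mathcal{S}\times\mathcal{A}\to\mathcal{S}$, reward distribution $R(s,a)$ (a real random variable for each $(s,a)$), initial state distribution $\rho_0$ and discount $\gamma\in[0,1)$. A value distribution $Z$ assigns to each $(s,a)$ a real random variable $Z(s,a)$ with bounded moments; for a policy $\pi$, $Z^\pi(s,a)=\sum_{t\ge0}\gamma^t R(s_t,a_t)$ is the random discounted return starting from $(s,a)$ and following $\pi$. A distortion risk measure $\beta$ with distortion function $h_\beta:[0,1]\to[0,1]$ (continuous, non-decreasing) is $\beta[X]=\int_{-\infty}^{\infty}x\,\frac{\partial}{\partial x}(h_\beta\circ F_X)(x)\,dx$, where $F_X$ is the CDF of $X$; the mean corresponds to $h_\beta=\mathrm{id}$. Given $Z$, let $\pi_\beta(s)\in\arg\max_{a\in\mathcal{A}}\beta[Z(s,a)]$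 (ties broken arbitrarily), and define $\mathcal{T}^*_\beta Z(s,a)$ to have the same distribution as $R(s,a)+\gamma Z(s',A')$ with $s'=M(s,a)$, $A'\sim\pi_\beta(\cdot\mid s')$. The RSRL objective is to find a policy $\pi^*_\beta\in\arg\max_\pi\mathbb{E}_{S_0\sim\rho_0,A_0\sim\pi}\big[\beta[Z^\pi(S_0,A_0)]\big]$, with $Z^*$ the return distribution of such an optimal policy. For real-valued functions $f_1,f_2$ on $\mathcal{S}\times\mathcal{A}$, $\|f_1-f_2\|_\infty=\sup_{s,a}|f_1(s,a)-f_2(s,a)|$. *)

theory Defs
  imports "HOL-Probability.Probability" "HOL-Probability.Convolution"
begin

definition distortion :: "(real \<Rightarrow> real) \<Rightarrow> bool" where
  "distortion h \<longleftrightarrow> continuous_on {0..1} h \<and> mono_on {0..1} h \<and> h ` {0..1} \<subseteq> {0..1}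
     \<and> h 0 = 0 \<and> h 1 = 1"

definition drm :: "(real \<Rightarrow> real) \<Rightarrow> real measure \<Rightarrow> real" where
  "drm h \<mu> = integral\<^sup>L (interval_measure (\<lambda>x. h (cdf \<mu> x))) (\<lambda>x. x)"

definition value_dist :: "real measure \<Rightarrow> bool" where
  "value_dist \<mu> \<longleftrightarrow> prob_space \<mu> \<and> sets \<mu> = sets borel \<and>
     (\<forall>n::nat. integrable \<mu> (\<lambda>x. \<bar>x\<bar> ^ n))"

definition mean :: "real measure \<Rightarrow> real" where
  "mean \<mu> = integral\<^sup>L \<mu> (\<lambda>x. x)"

text \<open>State space S, action space A, deterministic transition Mt, reward distributions R,
  discount g, initial distribution rho0.\<close>
definition mdp :: "nat set \<Rightarrow> nat set \<Rightarrow> (nat \<Rightarrow> nat \<Rightarrow> nat) \<Rightarrow> (nat \<Rightarrow> nat \<Rightarrow> real measure)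
    \<Rightarrow> real \<Rightarrow> nat pmf \<Rightarrow> bool" where
  "mdp S A Mt R g rho0 \<longleftrightarrow> finite S \<and> S \<noteq> {} \<and> finite A \<and> A \<noteq> {} \<and>
     (\<forall>s\<in>S. \<forall>a\<in>A. Mt s a \<in> S \<and> prob_space (R s a) \<and> sets (R s a) = sets borel) \<and>
     0 \<le> g \<and> g < 1 \<and> set_pmf rho0 \<subseteq> S"

definition value_distribution :: "nat set \<Rightarrow> nat set \<Rightarrow> (nat \<Rightarrow> nat \<Rightarrow> real measure) \<Rightarrow> bool" where
  "value_distribution S A Z \<longleftrightarrow> (\<forall>s\<in>S. \<forall>a\<in>A. value_dist (Z s a))"

definition greedy :: "(real \<Rightarrow> real) \<Rightarrow> nat set \<Rightarrow> nat set \<Rightarrow> (nat \<Rightarrow> nat \<Rightarrow> real measure)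
    \<Rightarrow> (nat \<Rightarrow> nat) \<Rightarrow> bool" where
  "greedy h S A Z p \<longleftrightarrow> (\<forall>s\<in>S. p s \<in> A \<and> (\<forall>a\<in>A. drm h (Z s a) \<le> drm h (Z s (p s))))"

text \<open>Risk-sensitive distributional Bellman optimality operator, for the greedy policy p:
  law of R(s,a) + g * Z(s', p s'), reward independent of the next-state return.\<close>
definition bellman :: "(nat \<Rightarrow> nat \<Rightarrow> nat) \<Rightarrow> (nat \<Rightarrow> nat \<Rightarrow> real measure) \<Rightarrow> real
    \<Rightarrow> (nat \<Rightarrow> nat) \<Rightarrow> (nat \<Rightarrow> nat \<Rightarrow> real measure) \<Rightarrow> nat \<Rightarrow> nat \<Rightarrow> real measure" where
  "bellman Mt R g p Z s a = convolution (R s a) (distr (Z (Mt s a) (p (Mt s a))) borel (\<lambda>x. g * x))"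

definition supnorm :: "nat set \<Rightarrow> nat set \<Rightarrow> (nat \<Rightarrow> nat \<Rightarrow> real) \<Rightarrow> real" where
  "supnorm S A f = Sup {\<bar>f s a\<bar> | s a. s \<in> S \<and> a \<in> A}"

definition policy :: "nat set \<Rightarrow> nat set \<Rightarrow> (nat \<Rightarrow> nat pmf) \<Rightarrow> bool" where
  "policy S A p \<longleftrightarrow> (\<forall>s\<in>S. set_pmf (p s) \<subseteq> A)"

text \<open>Law of the truncated return sum_{t<=n} g^t R(s_t,a_t), rewards drawn independently.\<close>
fun trunc_ret :: "(nat \<Rightarrow> nat \<Rightarrow> nat) \<Rightarrow> (nat \<Rightarrow> nat \<Rightarrow> real measure) \<Rightarrow> real
    \<Rightarrow> (nat \<Rightarrow> nat pmf) \<Rightarrow> nat \<Rightarrow> nat \<Rightarrow> nat \<Rightarrow> real measure" where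
  "trunc_ret Mt R g p 0 s a = R s a"
| "trunc_ret Mt R g p (Suc n) s a =
     convolution (R s a)
       (distr (measure_pmf (p (Mt s a)) \<bind> (\<lambda>a'. trunc_ret Mt R g p n (Mt s a) a'))
          borel (\<lambda>x. g * x))"

definition return_dist :: "(nat \<Rightarrow> nat \<Rightarrow> nat) \<Rightarrow> (nat \<Rightarrow> nat \<Rightarrow> real measure) \<Rightarrow> real
    \<Rightarrow> (nat \<Rightarrow> nat pmf) \<Rightarrow> nat \<Rightarrow> nat \<Rightarrow> real measure" where
  "return_dist Mt R g p s a =
     (THE \<mu>. real_distribution \<mu> \<and> weak_conv_m (\<lambda>n. trunc_ret Mt R g p n s a) \<mu>)"

definition objective :: "(real \<Rightarrow> real) \<Rightarrow> (nat \<Rightarrow> nat \<Rightarrow> nat) \<Rightarrow> (nat \<Rightarrow> nat \<Rightarrow> real measure)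
    \<Rightarrow> real \<Rightarrow> nat pmf \<Rightarrow> (nat \<Rightarrow> nat pmf) \<Rightarrow> real" where
  "objective h Mt R g rho0 p =
     measure_pmf.expectation rho0
       (\<lambda>s. measure_pmf.expectation (p s) (\<lambda>a. drm h (return_dist Mt R g p s a)))"

definition optimal :: "(real \<Rightarrow> real) \<Rightarrow> nat set \<Rightarrow> nat set \<Rightarrow> (nat \<Rightarrow> nat \<Rightarrow> nat)
    \<Rightarrow> (nat \<Rightarrow> nat \<Rightarrow> real measure) \<Rightarrow> real \<Rightarrow> nat pmf \<Rightarrow> (nat \<Rightarrow> nat pmf) \<Rightarrow> bool" where
  "optimal h S A Mt R g rho0 p \<longleftrightarrow> policy S A p \<and>
     (\<forall>q. policy S A q \<longrightarrow> objective h Mt R g rho0 q \<le> objective h Mt R g rho0 p)"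

definition bellman_iteration :: "(real \<Rightarrow> real) \<Rightarrow> nat set \<Rightarrow> nat set \<Rightarrow> (nat \<Rightarrow> nat \<Rightarrow> nat)
    \<Rightarrow> (nat \<Rightarrow> nat \<Rightarrow> real measure) \<Rightarrow> real \<Rightarrow> (nat \<Rightarrow> nat \<Rightarrow> real measure)
    \<Rightarrow> (nat \<Rightarrow> nat \<Rightarrow> nat \<Rightarrow> real measure) \<Rightarrow> (nat \<Rightarrow> nat \<Rightarrow> nat) \<Rightarrow> bool" where
  "bellman_iteration h S A Mt R g Z0 Zs ps \<longleftrightarrow>
     (\<forall>s\<in>S. \<forall>a\<in>A. Zs 0 s a = Z0 s a) \<and>
     (\<forall>k. greedy h S A (Zs k) (ps k)) \<and>
     (\<forall>k. \<forall>s\<in>S. \<forall>a\<in>A. Zs (Suc k) s a = bellman Mt R g (ps k) (Zs k) s a)"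

end

theory Submission
  imports Defs
begin


definition dm :: "real pmf \<Rightarrow> real measure" where
  "dm P = distr (measure_pmf P) borel (\<lambda>x. x)"

lemma sets_dm[simp]: "sets (dm P) = sets borel"
  by (simp add: dm_def)

lemma space_dm[simp]: "space (dm P) = UNIV"
  by (simp add: dm_def)

lemma emeasure_dm: "emeasure (dm P) A = emeasure (measure_pmf P) A" if "A \<in> sets borel"
  using that by (simp add: dm_def emeasure_distr)

lemma measure_dm: "measure (dm P) A = measure (measure_pmf P) A" if "A \<in> sets borel"
  using that by (simp add: dm_def measure_distr)

lemma real_distribution_dm: "real_distribution (dm P)"
  unfolding real_distribution_def real_distribution_axioms_def dm_def
  by (auto intro!: prob_space.prob_space_distr simp: measure_pmf.prob_space_axioms)

lemma cdf_dm: "cdf (dm P) x = measure (measure_pmf P) {..x}"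
  by (simp add: cdf_def measure_dm)

lemma integral_dm: "integral\<^sup>L (dm P) (f::real\<Rightarrow>real) = integral\<^sup>L (measure_pmf P) f" if "f \<in> borel_measurable borel"
  using that integral_distr[of "\<lambda>x. x" "measure_pmf P" borel f] unfolding dm_def by simp

lemma interval_measure_cdf:
  assumes "real_distribution M"
  shows "interval_measure (cdf M) = M"
proof -
  interpret real_distribution M by fact
  have "real_distribution (interval_measure (cdf M))"
    by (rule real_distribution_interval_measure)
       (auto simp: cdf_nondecreasing cdf_is_right_cont cdf_lim_at_bot cdf_lim_at_top_prob)
  moreover have "cdf (interval_measure (cdf M)) = cdf M"
    by (rule cdf_interval_measure) (auto simp: cdf_nondecreasing cdf_is_right_cont cdf_lim_at_bot)
  ultimately show ?thesis using assms by (intro cdf_unique) auto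
qed

lemma measure_pmf_cong_support:
  assumes "A \<inter> set_pmf P = B \<inter> set_pmf P"
  shows "measure (measure_pmf P) A = measure (measure_pmf P) B"
  by (metis assms measure_Int_set_pmf)

definition dsum :: "(real \<Rightarrow> real) \<Rightarrow> real set \<Rightarrow> real pmf \<Rightarrow> real" where
  "dsum h V P = (\<Sum>v\<in>V. v * (h (measure (measure_pmf P) {..v}) - h (measure (measure_pmf P) {..<v})))"

lemma tele:
  fixes h :: "real \<Rightarrow> real" and x :: real and P :: "real pmf"
  assumes V: "finite V" "set_pmf P \<subseteq> V" and h0: "h 0 = 0"
  shows "(\<Sum>v\<in>V \<inter> {..x}. h (measure (measure_pmf P) {..v}) - h (measure (measure_pmf P) {..<v}))
         = h (measure (measure_pmf P) {..x})"
  using V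
proof (induction "card (V \<inter> {..x})" arbitrary: x rule: less_induct)
  case less
  let ?G = "\<lambda>A. measure (measure_pmf P) A"
  let ?J = "\<lambda>v. h (?G {..v}) - h (?G {..<v})"
  show ?case
  proof (cases "V \<inter> {..x} = {}")
    case True
    then have "?G {..x} = ?G {}"
      using less.prems by (intro measure_pmf_cong_support) auto
    then show ?thesis using True h0 by simp
  next
    case False
    define b where "b = Max (V \<inter> {..x})"
    have fin: "finite (V \<inter> {..x})" using less.prems by auto
    have b: "b \<in> V" "b \<le> x" "\<And>v. v \<in> V \<Longrightarrow> v \<le> x \<Longrightarrow> v \<le> b"
      using Max_in[OF fin False] Max_ge[OF fin] unfolding b_def by auto
    have split: "V \<inter> {..x} = insert b (V \<inter> {..<b})"
    proof (intro set_eqI iffI)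
      fix v assume "v \<in> V \<inter> {..x}"
      then show "v \<in> insert b (V \<inter> {..<b})" using b(3)[of v] by (cases "v = b") auto
    qed (use b in auto)
    have Gx: "?G {..x} = ?G {..b}"
      using less.prems b by (intro measure_pmf_cong_support) (auto simp: subset_iff)
    have rest: "(\<Sum>v\<in>V \<inter> {..<b}. ?J v) = h (?G {..<b})"
    proof (cases "V \<inter> {..<b} = {}")
      case True
      then have "?G {..<b} = ?G {}"
        using less.prems by (intro measure_pmf_cong_support) auto
      then show ?thesis using True h0 by simp
    next
      case False2: False
      have fin2: "finite (V \<inter> {..<b})" using less.prems by auto
      define b' where "b' = Max (V \<inter> {..<b})"
      have b': "b' \<in> V" "b' < b" "\<And>v. v \<in> V \<Longrightarrow> v < b \<Longrightarrow> v \<le> b'"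
        using Max_in[OF fin2 False2] Max_ge[OF fin2] unfolding b'_def by auto
      have eq: "V \<inter> {..<b} = V \<inter> {..b'}" using b' by force
      have "card (V \<inter> {..b'}) < card (V \<inter> {..x})"
        using fin b b' eq split by (metis card_insert_disjoint fin2 lessI lessThan_iff IntE order_less_irrefl)
      then have IH: "(\<Sum>v\<in>V \<inter> {..b'}. ?J v) = h (?G {..b'})"
        using less by blast
      have "?G {..b'} = ?G {..<b}"
        using less.prems b' by (intro measure_pmf_cong_support) (auto simp: subset_iff)
      then show ?thesis using IH eq by simp
    qed
    have "b \<notin> V \<inter> {..<b}" by auto
    then have "(\<Sum>v\<in>V \<inter> {..x}. ?J v) = ?J b + (\<Sum>v\<in>V \<inter> {..<b}. ?J v)"
      by (simp add: split less.prems)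
    then show ?thesis using rest Gx by simp
  qed
qed

lemma prob_le_atMost_pmf:
  fixes P :: "real pmf"
  assumes "finite V" "set_pmf P \<subseteq> V" "\<forall>v\<in>V. v \<le> x"
  shows "measure (measure_pmf P) {..x} = 1"
proof -
  have "measure (measure_pmf P) {..x} = measure (measure_pmf P) UNIV"
    using assms by (intro measure_pmf_cong_support) auto
  then show ?thesis by simp
qed

lemma drm_dm:
  fixes h :: "real \<Rightarrow> real" and P :: "real pmf"
  assumes h: "distortion h" and V: "finite V" "set_pmf P \<subseteq> V"
  shows "drm h (dm P) = dsum h V P"
proof -
  let ?G = "\<lambda>A. measure (measure_pmf P) A"
  define J where "J v = h (?G {..v}) - h (?G {..<v})" for v
  have h0: "h 0 = 0" and h1: "h 1 = 1" and hm: "mono_on {0..1} h"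
    using h by (auto simp: distortion_def)
  have J0: "0 \<le> J v" for v
  proof -
    have "?G {..<v} \<le> ?G {..v}" by (intro measure_pmf.finite_measure_mono) auto
    then show ?thesis unfolding J_def
      by (auto intro!: mono_onD[OF hm] simp: measure_nonneg)
  qed
  define f where "f v = (if v \<in> V then J v else 0)" for v
  have f0: "0 \<le> f v" for v using J0 by (simp add: f_def)
  have Vne: "V \<noteq> {}" using V set_pmf_not_empty[of P] by auto
  have tel: "(\<Sum>v\<in>V \<inter> {..x}. J v) = h (?G {..x})" for x
    unfolding J_def by (rule tele[of V P h x, OF V h0])
  have sumJ: "(\<Sum>v\<in>V. J v) = 1"
  proof -
    have "V \<inter> {..Max V} = V" using V Vne by auto
    then have "(\<Sum>v\<in>V. J v) = h (?G {..Max V})" using tel[of "Max V"] by simp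
    also have "?G {..Max V} = 1"
      using V Vne by (intro prob_le_atMost_pmf[OF V]) auto
    finally show ?thesis using h1 by simp
  qed
  have prob: "(\<integral>\<^sup>+v. ennreal (f v) \<partial>count_space UNIV) = 1"
  proof -
    have "(\<integral>\<^sup>+v. ennreal (f v) \<partial>count_space UNIV) = (\<Sum>v\<in>V. ennreal (f v))"
      using V by (intro nn_integral_count_space') (auto simp: f_def)
    also have "\<dots> = ennreal (\<Sum>v\<in>V. f v)"
      using f0 by (simp add: sum_ennreal)
    also have "(\<Sum>v\<in>V. f v) = 1" using sumJ by (simp add: f_def)
    finally show ?thesis by simp
  qed
  define Q where "Q = embed_pmf f"
  have pQ: "pmf Q v = f v" for v
    unfolding Q_def by (rule pmf_embed_pmf[OF f0 prob])
  have sQ: "set_pmf Q \<subseteq> V"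
    by (auto simp: set_pmf_iff pQ f_def split: if_splits)
  have cdfQ: "cdf (dm Q) x = h (cdf (dm P) x)" for x
  proof -
    have "cdf (dm Q) x = measure (measure_pmf Q) {..x}" by (simp add: cdf_dm)
    also have "\<dots> = measure (measure_pmf Q) (V \<inter> {..x})"
      using sQ by (intro measure_pmf_cong_support) auto
    also have "\<dots> = (\<Sum>v\<in>V \<inter> {..x}. pmf Q v)"
      using V by (intro measure_measure_pmf_finite) auto
    also have "\<dots> = (\<Sum>v\<in>V \<inter> {..x}. J v)"
      by (intro sum.cong) (auto simp: pQ f_def)
    also have "\<dots> = h (cdf (dm P) x)" using tel by (simp add: cdf_dm)
    finally show ?thesis .
  qed
  have "interval_measure (\<lambda>x. h (cdf (dm P) x)) = interval_measure (cdf (dm Q))"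
  proof -
    have "(\<lambda>x. h (cdf (dm P) x)) = cdf (dm Q)" using cdfQ by (intro ext) simp
    then show ?thesis by simp
  qed
  also have "\<dots> = dm Q" by (rule interval_measure_cdf[OF real_distribution_dm])
  finally have "drm h (dm P) = integral\<^sup>L (dm Q) (\<lambda>x. x)" by (simp add: drm_def)
  also have "\<dots> = integral\<^sup>L (measure_pmf Q) (\<lambda>x. x)" by (simp add: integral_dm)
  also have "\<dots> = (\<Sum>v\<in>V. pmf Q v *\<^sub>R v)"
    using V sQ by (intro integral_measure_pmf) auto
  also have "\<dots> = dsum h V P"
    unfolding dsum_def by (intro sum.cong) (auto simp: pQ f_def J_def)
  finally show ?thesis .
qed



definition pconv :: "real \<Rightarrow> real pmf \<Rightarrow> real pmf \<Rightarrow> real pmf" where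
  "pconv g P Q = map_pmf (\<lambda>(a,b). a + g * b) (pair_pmf P Q)"

lemma prob_space_dm: "prob_space (dm P)"
  using real_distribution_dm[of P] by (simp add: real_distribution_def)

lemma finite_measure_dm: "finite_measure (dm P)"
  using prob_space_dm[of P] by (simp add: prob_space_def)

lemma distr_dm: "distr (dm P) borel f = dm (map_pmf f P)" if fmeas[measurable]: "f \<in> borel_measurable borel"
proof (rule measure_eqI)
  fix A :: "real set" assume A: "A \<in> sets (distr (dm P) borel f)"
  then have A': "A \<in> sets borel" by simp
  have "f -` A \<in> sets borel" using A' that by (rule measurable_sets_borel[rotated])
  have fm: "f \<in> measurable (dm P) borel"
  proof -
    have eq: "measurable (dm P) borel = measurable borel borel"
      by (rule measurable_cong_sets) auto
    show ?thesis by (subst eq) (rule fmeas)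
  qed
  then show "emeasure (distr (dm P) borel f) A = emeasure (dm (map_pmf f P)) A"
    using A' \<open>f -` A \<in> sets borel\<close> by (simp add: emeasure_distr emeasure_dm)
qed simp

lemma conv_dm0: "convolution (dm P) (dm Q) = dm (map_pmf (\<lambda>(a,b). a + b) (pair_pmf P Q))"
proof (rule measure_eqI)
  show "sets (dm P \<star> dm Q) = sets (dm (map_pmf (\<lambda>(a,b). a + b) (pair_pmf P Q)))"
    by (simp add: convolution_def)
  fix A :: "real set" assume A: "A \<in> sets (dm P \<star> dm Q)"
  then have A': "A \<in> sets borel" by (simp add: convolution_def)
  have "emeasure (dm P \<star> dm Q) A = \<integral>\<^sup>+x. \<integral>\<^sup>+y. indicator A (x + y) \<partial>dm Q \<partial>dm P"
    using A' by (intro convolution_emeasure') (auto simp: finite_measure_dm)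
  also have "\<dots> = \<integral>\<^sup>+x. \<integral>\<^sup>+y. indicator A (x + y) \<partial>dm Q \<partial>measure_pmf P"
  proof -
    interpret sigma_finite_measure "dm Q"
      using finite_measure_dm[of Q] by (simp add: finite_measure_def)
    have "(\<lambda>(x,y). indicator A (x + y) :: ennreal) \<in> borel_measurable (borel \<Otimes>\<^sub>M borel)"
      using A' by measurable
    then have "(\<lambda>(x,y). indicator A (x + y) :: ennreal) \<in> borel_measurable (borel \<Otimes>\<^sub>M dm Q)"
    proof -
      have eq: "borel_measurable (borel \<Otimes>\<^sub>M dm Q) = borel_measurable (borel \<Otimes>\<^sub>M borel)"
        by (rule measurable_cong_sets) (auto intro: sets_pair_measure_cong)
      show ?thesis by (subst eq) fact
    qed
    from borel_measurable_nn_integral_fst[OF this]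
    have "(\<lambda>x. \<integral>\<^sup>+y. indicator A (x + y) \<partial>dm Q) \<in> borel_measurable borel" by simp
    then show ?thesis by (simp add: dm_def nn_integral_distr)
  qed
  also have "\<dots> = \<integral>\<^sup>+x. \<integral>\<^sup>+y. indicator A (x + y) \<partial>measure_pmf Q \<partial>measure_pmf P"
    using A' by (intro nn_integral_cong) (simp add: dm_def nn_integral_distr)
  also have "\<dots> = \<integral>\<^sup>+z. indicator ((\<lambda>(a,b). a + b) -` A) z \<partial>measure_pmf (pair_pmf P Q)"
    by (subst nn_integral_pair_pmf') (simp add: indicator_def)
  also have "\<dots> = emeasure (dm (map_pmf (\<lambda>(a,b). a + b) (pair_pmf P Q))) A"
    using A' by (simp add: emeasure_dm)
  finally show "emeasure (dm P \<star> dm Q) A = emeasure (dm (map_pmf (\<lambda>(a,b). a + b) (pair_pmf P Q))) A" .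
qed

lemma conv_dm: "convolution (dm P) (distr (dm Q) borel (\<lambda>x. g * x)) = dm (pconv g P Q)"
proof -
  have "distr (dm Q) borel (\<lambda>x. g * x) = dm (map_pmf (\<lambda>x. g * x) Q)"
    by (rule distr_dm) measurable
  moreover have "map_pmf (\<lambda>(a,b). a + b) (pair_pmf P (map_pmf (\<lambda>x. g * x) Q)) = pconv g P Q"
    by (auto simp add: pconv_def pair_map_pmf2 map_pmf_comp apsnd_def map_prod_def case_prod_unfold)
  ultimately show ?thesis by (simp add: conv_dm0)
qed

lemma bind_dm: "measure_pmf q \<bind> (\<lambda>a. dm (K a)) = dm (bind_pmf q K)"
proof -
  have meas: "(\<lambda>a. dm (K a)) \<in> measurable (measure_pmf q) (subprob_algebra borel)"
    by (auto simp: space_subprob_algebra prob_space_dm prob_space_imp_subprob_space)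
  show ?thesis
  proof (rule measure_eqI)
    show "sets (measure_pmf q \<bind> (\<lambda>a. dm (K a))) = sets (dm (bind_pmf q K))"
      using meas by (subst sets_bind[where N=borel]) auto
    fix A assume A: "A \<in> sets (measure_pmf q \<bind> (\<lambda>a. dm (K a)))"
    then have A': "A \<in> sets borel" using meas by (subst (asm) sets_bind[where N=borel]) auto
    show "emeasure (measure_pmf q \<bind> (\<lambda>a. dm (K a))) A = emeasure (dm (bind_pmf q K)) A"
      using A' meas by (simp add: emeasure_bind[where N=borel] emeasure_dm)
  qed
qed

lemma return_dm: "return borel c = dm (return_pmf c)"
  by (rule measure_eqI) (auto simp: emeasure_dm)

lemma measure_pmf_sum:
  assumes "finite V" "set_pmf M \<subseteq> V"
  shows "measure (measure_pmf M) A = (\<Sum>v\<in>V. pmf M v * indicator A v)"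
proof -
  have "measure (measure_pmf M) A = measure (measure_pmf M) (V \<inter> A)"
    using assms by (intro measure_pmf_cong_support) auto
  also have "\<dots> = (\<Sum>v\<in>V \<inter> A. pmf M v)" using assms by (intro measure_measure_pmf_finite) auto
  also have "\<dots> = (\<Sum>v\<in>V. pmf M v * indicator A v)"
    using assms(1) by (simp add: sum.inter_restrict[symmetric] indicator_def if_distrib Int_commute cong: if_cong)
  finally show ?thesis .
qed

lemma measure_pconv:
  assumes "finite VP" "set_pmf P \<subseteq> VP" "finite VQ" "set_pmf Q \<subseteq> VQ"
  shows "measure (measure_pmf (pconv g P Q)) A =
    (\<Sum>a\<in>VP. \<Sum>b\<in>VQ. pmf P a * pmf Q b * indicator A (a + g * b))"
proof -
  have "measure (measure_pmf (pconv g P Q)) A = measure (measure_pmf (pair_pmf P Q)) ((\<lambda>(a,b). a + g * b) -` A)"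
    by (simp add: pconv_def)
  also have "\<dots> = (\<Sum>z\<in>VP \<times> VQ. pmf (pair_pmf P Q) z * indicator ((\<lambda>(a,b). a + g * b) -` A) z)"
    using assms by (intro measure_pmf_sum) auto
  also have "\<dots> = (\<Sum>a\<in>VP. \<Sum>b\<in>VQ. pmf P a * pmf Q b * indicator A (a + g * b))"
    apply (simp add: sum.cartesian_product indicator_def case_prod_unfold)
    apply (intro sum.cong refl)
    apply (metis pmf_pair prod.collapse)
    done
  finally show ?thesis .
qed

lemma set_pconv: "set_pmf (pconv g P Q) = (\<lambda>(a,b). a + g * b) ` (set_pmf P \<times> set_pmf Q)"
  by (simp add: pconv_def)



lemma aux_abs3:
  fixes a b c a1 b1 :: real
  assumes "a \<le> c" "c \<le> a1" "b \<le> c" "c \<le> b1" "a1 - a < \<bar>a - b\<bar> / 3" "b1 - b < \<bar>a - b\<bar> / 3"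
  shows False
proof -
  have h5: "3 * a1 - 3 * a < \<bar>a - b\<bar>" "3 * b1 - 3 * b < \<bar>a - b\<bar>" using assms(5,6) by (simp_all add: field_simps)
  show False
proof (cases "a \<le> b")
  case True
  then have "\<bar>a - b\<bar> = b - a" by simp
  then show False using assms h5 True by linarith
next
  case False
  then have "\<bar>a - b\<bar> = a - b" by simp
  then show False using assms h5 False by linarith
qed
qed

lemma weak_lim_unique:
  assumes mu: "real_distribution \<mu>" and nu: "real_distribution \<nu>"
    and ev: "\<And>n. n \<ge> N \<Longrightarrow> M n = \<mu>" and wc: "weak_conv_m M \<nu>"
  shows "\<nu> = \<mu>"
proof (rule cdf_unique[OF nu mu], rule ext)
  fix x :: real
  interpret mu: real_distribution \<mu> by fact
  interpret nu: real_distribution \<nu> by fact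
  have cont: "cdf \<nu> y = cdf \<mu> y" if "isCont (cdf \<nu>) y" for y
  proof -
    have l1: "(\<lambda>n. cdf (M n) y) \<longlonglongrightarrow> cdf \<nu> y"
      using wc that by (auto simp: weak_conv_m_def weak_conv_def)
    have "eventually (\<lambda>n. cdf (M n) y = cdf \<mu> y) sequentially"
      using ev by (auto simp: eventually_sequentially)
    then have "(\<lambda>n. cdf (M n) y) \<longlonglongrightarrow> cdf \<mu> y"
      by (rule tendsto_eventually[OF eventually_mono]) auto
    then show ?thesis using l1 LIMSEQ_unique by blast
  qed
  have monnu: "mono (cdf \<nu>)" by (auto simp: mono_def nu.cdf_nondecreasing)
  have D: "countable {a. \<not> isCont (cdf \<nu>) a}" by (rule mono_ctble_discont[OF monnu])
  show "cdf \<nu> x = cdf \<mu> x"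
  proof (rule ccontr)
    assume ne: "cdf \<nu> x \<noteq> cdf \<mu> x"
    define e where "e = \<bar>cdf \<nu> x - cdf \<mu> x\<bar> / 3"
    have e: "e > 0" using ne by (simp add: e_def)
    obtain d1 where d1: "d1 > 0" "cdf \<nu> (x + d1) - cdf \<nu> x < e"
      using nu.cdf_is_right_cont[of x] e
      by (subst (asm) continuous_at_right_real_increasing) (auto simp: nu.cdf_nondecreasing)
    obtain d2 where d2: "d2 > 0" "cdf \<mu> (x + d2) - cdf \<mu> x < e"
      using mu.cdf_is_right_cont[of x] e
      by (subst (asm) continuous_at_right_real_increasing) (auto simp: mu.cdf_nondecreasing)
    have md: "min d1 d2 > 0" using d1 d2 by (auto simp: min_def)
    have "x < x + min d1 d2" using md by linarith
    then have ne2: "{x <..< x + min d1 d2} \<noteq> {}" by (metis greaterThanLessThan_empty_iff not_le)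
    obtain y where y: "y \<in> {x <..< x + min d1 d2}" "y \<notin> {a. \<not> isCont (cdf \<nu>) a}"
      using open_minus_countable[OF D ne2 open_greaterThanLessThan] by blast
    have "cdf \<nu> y = cdf \<mu> y" using cont y by auto
    moreover have "cdf \<nu> x \<le> cdf \<nu> y" "cdf \<nu> y \<le> cdf \<nu> (x + d1)"
      using y by (auto intro!: nu.cdf_nondecreasing)
    moreover have "cdf \<mu> x \<le> cdf \<mu> y" "cdf \<mu> y \<le> cdf \<mu> (x + d2)"
      using y by (auto intro!: mu.cdf_nondecreasing)
    ultimately show False using d1 d2 unfolding e_def
      by (intro aux_abs3[of "cdf \<nu> x" "cdf \<nu> y" "cdf \<mu> x" "cdf \<nu> (x + d1)" "cdf \<mu> (x + d2)"]) auto
  qed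
qed

lemma weak_conv_const:
  assumes "\<And>n. n \<ge> N \<Longrightarrow> M n = \<mu>"
  shows "weak_conv_m M \<mu>"
  unfolding weak_conv_m_def weak_conv_def
proof (intro allI impI)
  fix x
  have "eventually (\<lambda>n. cdf (M n) x = cdf \<mu> x) sequentially"
    using assms by (auto simp: eventually_sequentially)
  then show "(\<lambda>n. cdf (M n) x) \<longlonglongrightarrow> cdf \<mu> x"
    by (rule tendsto_eventually[OF eventually_mono]) auto
qed

lemma return_dist_eq:
  assumes "\<And>n. n \<ge> N \<Longrightarrow> trunc_ret Mt R g p n s a = \<mu>" "real_distribution \<mu>"
  shows "return_dist Mt R g p s a = \<mu>"
  unfolding return_dist_def
proof (rule the_equality)
  show "real_distribution \<mu> \<and> weak_conv_m (\<lambda>n. trunc_ret Mt R g p n s a) \<mu>"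
    using assms weak_conv_const[of N] by auto
  fix \<nu> assume "real_distribution \<nu> \<and> weak_conv_m (\<lambda>n. trunc_ret Mt R g p n s a) \<nu>"
  then show "\<nu> = \<mu>" using weak_lim_unique[OF assms(2), of \<nu> N "\<lambda>n. trunc_ret Mt R g p n s a"] assms(1) by auto
qed



lemma feq_max_le0:
  fixes k :: "real \<Rightarrow> real"
  assumes cont: "continuous_on {0..1} k" and k0: "k 0 = 0" and k1: "k 1 = 0"
    and eq: "\<And>x y. x \<in> {0..1} \<Longrightarrow> y \<in> {0..1} \<Longrightarrow> k x + k y = k (x * y) + k (x + y - x * y)"
  shows "\<And>u. u \<in> {0..1} \<Longrightarrow> k u \<le> 0"
proof -
  obtain m where m: "m \<in> {0..1}" "\<And>u. u \<in> {0..1} \<Longrightarrow> k u \<le> k m"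
    using continuous_attains_sup[of "{0..1::real}" k] cont by auto
  have mem1: "x * y \<in> {0..1}" "x + y - x * y \<in> {0..1}" if "x \<in> {0..1}" "y \<in> {0..1}" for x y :: real
  proof -
    have "0 \<le> x * y" "x * y \<le> 1" using that by (auto intro: mult_le_one)
    moreover have "0 \<le> (1 - x) * (1 - y)" "(1 - x) * (1 - y) \<le> 1" using that by (auto intro: mult_le_one)
    ultimately show "x * y \<in> {0..1}" "x + y - x * y \<in> {0..1}" by (auto simp: algebra_simps)
  qed
  have powm: "m ^ n \<in> {0..1}" for n using m(1) by (auto intro: power_le_one)
  have iter: "k (m ^ Suc n) = k m" for n
  proof (induction n)
    case 0 then show ?case by simp
  next
    case (Suc n)
    have "k m + k (m ^ Suc n) = k (m * m ^ Suc n) + k (m + m ^ Suc n - m * m ^ Suc n)"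
      using eq[OF m(1) powm] .
    moreover have "k (m * m ^ Suc n) \<le> k m" using m(2) mem1(1)[OF m(1) powm] by blast
    moreover have "k (m + m ^ Suc n - m * m ^ Suc n) \<le> k m" using m(2) mem1(2)[OF m(1) powm] by blast
    ultimately show ?case using Suc by simp
  qed
  have "k m = 0"
  proof (cases "m = 1")
    case True then show ?thesis using k1 by simp
  next
    case False
    then have "norm m < 1" using m(1) by auto
    then have "(\<lambda>n. m ^ Suc n) \<longlonglongrightarrow> 0"
      using LIMSEQ_power_zero LIMSEQ_Suc by blast
    then have "(\<lambda>n. k (m ^ Suc n)) \<longlonglongrightarrow> k 0"
    proof (rule continuous_on_tendsto_compose[OF cont])
      show "\<forall>\<^sub>F n in sequentially. m ^ Suc n \<in> {0..1}"
        using powm by (intro always_eventually allI) blast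
    qed auto
    then have "(\<lambda>n. k m) \<longlonglongrightarrow> 0" using iter k0 by simp
    then show ?thesis by (simp add: LIMSEQ_const_iff)
  qed
  then show "\<And>u. u \<in> {0..1} \<Longrightarrow> k u \<le> 0" using m(2) by fastforce
qed

lemma feq_id:
  fixes h :: "real \<Rightarrow> real"
  assumes h: "distortion h"
    and eq: "\<And>x y. x \<in> {0..1} \<Longrightarrow> y \<in> {0..1} \<Longrightarrow> h x + h y = h (x * y) + h (x + y - x * y)"
  shows "\<And>u. u \<in> {0..1} \<Longrightarrow> h u = u"
proof -
  have cont: "continuous_on {0..1} h" and h0: "h 0 = 0" and h1: "h 1 = 1"
    using h by (auto simp: distortion_def)
  have c1: "continuous_on {0..1} (\<lambda>u. h u - u)"
    by (intro continuous_intros cont)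
  have c2: "continuous_on {0..1} (\<lambda>u. - (h u - u))"
    by (intro continuous_intros cont)
  have e1: "(h x - x) + (h y - y) = (h (x * y) - x * y) + (h (x + y - x * y) - (x + y - x * y))"
    if "x \<in> {0..1}" "y \<in> {0..1}" for x y
    using eq[OF that] by linarith
  have e2: "- (h x - x) + - (h y - y) = - (h (x * y) - x * y) + - (h (x + y - x * y) - (x + y - x * y))"
    if "x \<in> {0..1}" "y \<in> {0..1}" for x y
    using eq[OF that] by linarith
  fix u :: real assume u: "u \<in> {0..1}"
  have "h u - u \<le> 0"
    by (rule feq_max_le0[OF c1 _ _ e1 u]) (auto simp: h0 h1)
  moreover have "- (h u - u) \<le> 0"
    by (rule feq_max_le0[OF c2 _ _ e2 u]) (auto simp: h0 h1)
  ultimately show "h u = u" by simp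
qed

lemma id_drm_mean:
  fixes h :: "real \<Rightarrow> real"
  assumes "\<And>u. u \<in> {0..1} \<Longrightarrow> h u = u"
  shows "\<exists>c d. \<forall>\<mu>. value_dist \<mu> \<longrightarrow> drm h \<mu> = c * mean \<mu> + d"
proof (intro exI allI impI)
  fix \<mu> assume "value_dist \<mu>"
  then have rd: "real_distribution \<mu>"
    by (simp add: value_dist_def real_distribution_def real_distribution_axioms_def)
  interpret real_distribution \<mu> by fact
  have "(\<lambda>x. h (cdf \<mu> x)) = cdf \<mu>"
    using assms cdf_nonneg cdf_bounded_prob by (auto simp: fun_eq_iff)
  then show "drm h \<mu> = 1 * mean \<mu> + 0"
    by (simp add: drm_def mean_def interval_measure_cdf[OF rd])
qed



definition tp :: "real \<Rightarrow> real pmf" where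
  "tp x = embed_pmf (\<lambda>v. if v = 0 then x else if v = 1 then 1 - x else 0)"

lemma pmf_embed_finite:
  fixes f :: "'a \<Rightarrow> real"
  assumes V: "finite V" and f0: "\<And>v. 0 \<le> f v" and out: "\<And>v. v \<notin> V \<Longrightarrow> f v = 0"
    and s: "sum f V = 1"
  shows "pmf (embed_pmf f) v = f v"
proof (rule pmf_embed_pmf[OF f0])
  have "(\<integral>\<^sup>+v. ennreal (f v) \<partial>count_space UNIV) = (\<Sum>v\<in>V. ennreal (f v))"
    using V out by (intro nn_integral_count_space') auto
  also have "\<dots> = ennreal (sum f V)" using f0 by (simp add: sum_ennreal)
  finally show "(\<integral>\<^sup>+v. ennreal (f v) \<partial>count_space UNIV) = 1" using s by simp
qed

lemma pmf_tp:
  assumes "x \<in> {0..1}"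
  shows "pmf (tp x) v = (if v = 0 then x else if v = 1 then 1 - x else 0)"
  unfolding tp_def using assms by (intro pmf_embed_finite[of "{0,1}"]) auto

lemma sum2: "a \<noteq> b \<Longrightarrow> (\<Sum>v\<in>{a,b}. f v) = f a + f b"
  by simp

lemma sum1: "(\<Sum>v\<in>{c}. f v) = f c"
  by simp

lemma measure_pmf_sum2:
  assumes "set_pmf M \<subseteq> {a, b}" "a \<noteq> b"
  shows "measure (measure_pmf M) A = pmf M a * indicator A a + pmf M b * indicator A b"
proof -
  have "measure (measure_pmf M) A = (\<Sum>v\<in>{a,b}. pmf M v * indicator A v)"
    by (rule measure_pmf_sum) (use assms in auto)
  also have "\<dots> = pmf M a * indicator A a + pmf M b * indicator A b"
    by (rule sum2[OF assms(2)])
  finally show ?thesis .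
qed

lemma measure_pconv22:
  assumes "set_pmf P \<subseteq> {a, b}" "a \<noteq> b" "set_pmf Q \<subseteq> {c, d}" "c \<noteq> d"
  shows "measure (measure_pmf (pconv g P Q)) A =
    pmf P a * pmf Q c * indicator A (a + g * c) + pmf P a * pmf Q d * indicator A (a + g * d) +
    (pmf P b * pmf Q c * indicator A (b + g * c) + pmf P b * pmf Q d * indicator A (b + g * d))"
proof -
  have "measure (measure_pmf (pconv g P Q)) A =
    (\<Sum>a'\<in>{a,b}. \<Sum>b'\<in>{c,d}. pmf P a' * pmf Q b' * indicator A (a' + g * b'))"
    by (rule measure_pconv) (use assms in auto)
  also have "\<dots> = (\<Sum>b'\<in>{c,d}. pmf P a * pmf Q b' * indicator A (a + g * b')) +
      (\<Sum>b'\<in>{c,d}. pmf P b * pmf Q b' * indicator A (b + g * b'))"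
    by (rule sum2[OF assms(2)])
  also have "\<dots> = pmf P a * pmf Q c * indicator A (a + g * c) + pmf P a * pmf Q d * indicator A (a + g * d) +
    (pmf P b * pmf Q c * indicator A (b + g * c) + pmf P b * pmf Q d * indicator A (b + g * d))"
    by (simp only: sum2[OF assms(4)])
  finally show ?thesis .
qed

lemma measure_pconv21:
  assumes "set_pmf P \<subseteq> {a, b}" "a \<noteq> b"
  shows "measure (measure_pmf (pconv g P (return_pmf c))) A =
    pmf P a * indicator A (a + g * c) + pmf P b * indicator A (b + g * c)"
proof -
  have "measure (measure_pmf (pconv g P (return_pmf c))) A =
    (\<Sum>a'\<in>{a,b}. \<Sum>b'\<in>{c}. pmf P a' * pmf (return_pmf c) b' * indicator A (a' + g * b'))"
    by (rule measure_pconv) (use assms in auto)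
  also have "\<dots> = (\<Sum>b'\<in>{c}. pmf P a * pmf (return_pmf c) b' * indicator A (a + g * b')) +
      (\<Sum>b'\<in>{c}. pmf P b * pmf (return_pmf c) b' * indicator A (b + g * b'))"
    by (rule sum2[OF assms(2)])
  also have "\<dots> = pmf P a * indicator A (a + g * c) + pmf P b * indicator A (b + g * c)"
    by (simp only: sum1 pmf_return indicator_simps singletonI mult_1_right)
  finally show ?thesis .
qed

lemma set_tp: "x \<in> {0..1} \<Longrightarrow> set_pmf (tp x) \<subseteq> {0, 1}"
  by (auto simp: set_pmf_iff pmf_tp split: if_splits)

lemma measure_tp: "x \<in> {0..1} \<Longrightarrow> measure (measure_pmf (tp x)) A = x * indicator A 0 + (1 - x) * indicator A 1"
  by (subst measure_pmf_sum2[of _ 0 1]) (simp_all add: set_tp pmf_tp)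

lemma drm_return: "distortion h \<Longrightarrow> drm h (dm (return_pmf c)) = c"
  by (subst drm_dm[of h "{c}"]) (auto simp: dsum_def distortion_def)

lemma drm_tp:
  assumes h: "distortion h" and x: "x \<in> {0..1}"
  shows "drm h (dm (tp x)) = 1 - h x"
proof -
  have h0: "h 0 = 0" and h1: "h 1 = 1" using h by (auto simp: distortion_def)
  show ?thesis
    by (subst drm_dm[OF h _ set_tp[OF x]]) (auto simp: dsum_def measure_tp[OF x] h0 h1)
qed

lemma drm_conv_const:
  assumes h: "distortion h" and x: "x \<in> {0..1}"
  shows "drm h (dm (pconv (1/2) (tp x) (return_pmf c))) = 1 + c / 2 - h x"
proof -
  have h0: "h 0 = 0" and h1: "h 1 = 1" using h by (auto simp: distortion_def)
  have m: "measure (measure_pmf (pconv (1/2) (tp x) (return_pmf c))) A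
      = x * indicator A (c/2) + (1 - x) * indicator A (1 + c/2)" for A
    by (subst measure_pconv21[of _ 0 1]) (simp_all add: set_tp[OF x] pmf_tp[OF x])
  have s: "set_pmf (pconv (1/2) (tp x) (return_pmf c)) \<subseteq> {c/2, 1 + c/2}"
    using set_tp[OF x] by (auto simp: set_pconv)
  show ?thesis
    by (subst drm_dm[OF h _ s]) (auto simp: dsum_def m h0 h1 algebra_simps)
qed

lemma drm_conv_tp:
  assumes h: "distortion h" and x: "x \<in> {0..1}" and y: "y \<in> {0..1}"
  shows "drm h (dm (pconv (1/2) (tp x) (tp y))) = 3/2 - h (x*y) / 2 - h x / 2 - h (x + y - x*y) / 2"
proof -
  have h0: "h 0 = 0" and h1: "h 1 = 1" using h by (auto simp: distortion_def)
  have m: "measure (measure_pmf (pconv (1/2) (tp x) (tp y))) A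
      = x * y * indicator A 0 + x * (1 - y) * indicator A (1/2) + (1 - x) * y * indicator A 1
        + (1 - x) * (1 - y) * indicator A (3/2)" for A
    by (subst measure_pconv22[of _ 0 1 _ 0 1]) (simp_all add: set_tp[OF x] set_tp[OF y] pmf_tp[OF x] pmf_tp[OF y])
  have s: "set_pmf (pconv (1/2) (tp x) (tp y)) \<subseteq> {0, 1/2, 1, 3/2}"
  proof
    fix z assume "z \<in> set_pmf (pconv (1/2) (tp x) (tp y))"
    then obtain a b where ab: "a \<in> set_pmf (tp x)" "b \<in> set_pmf (tp y)" "z = a + 1/2 * b"
      by (auto simp: set_pconv)
    then have "a \<in> {0,1}" "b \<in> {0,1}" using set_tp[OF x] set_tp[OF y] by blast+
    then show "z \<in> {0, 1/2, 1, 3/2}" using ab(3) by auto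
  qed
  have e1: "x * y + x * (1 - y) = x" by (simp add: algebra_simps)
  have e2: "x * y + x * (1 - y) + (1 - x) * y = x + y - x * y" by (simp add: algebra_simps)
  have e3: "x * y + x * (1 - y) + (1 - x) * y + (1 - x) * (1 - y) = 1" by (simp add: algebra_simps)
  show ?thesis
    by (subst drm_dm[OF h _ s]) (simp_all add: dsum_def m h0 h1 e1 e2 e3 algebra_simps)
qed



lemma value_dist_dm:
  assumes "finite (set_pmf P)"
  shows "value_dist (dm P)"
  unfolding value_dist_def
proof (intro conjI allI)
  show "prob_space (dm P)" by (rule prob_space_dm)
  show "sets (dm P) = sets borel" by simp
  fix n :: nat
  have "integrable (measure_pmf P) (\<lambda>x::real. \<bar>x\<bar> ^ n)"
    using assms by (rule integrable_measure_pmf_finite)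
  then show "integrable (dm P) (\<lambda>x. \<bar>x\<bar> ^ n)"
    unfolding dm_def by (subst integrable_distr_eq) auto
qed

lemma pconv_return0: "pconv g P (return_pmf 0) = P"
  by (simp add: pconv_def pair_return_pmf2 map_pmf_comp)

lemma supnorm_single: "supnorm {s} {a} f = \<bar>f s a\<bar>"
proof -
  have "{\<bar>f s' a'\<bar> | s' a'. s' \<in> {s} \<and> a' \<in> {a}} = {\<bar>f s a\<bar>}" by auto
  then show ?thesis by (simp add: supnorm_def)
qed

lemma part2:
  fixes h :: "real \<Rightarrow> real"
  assumes h: "distortion h" and x: "x \<in> {0..1}" and y: "y \<in> {0..1}"
    and D: "h x + h y \<noteq> h (x*y) + h (x + y - x*y)"
  shows "\<exists>S A Mt R g rho0 Z1 Z2. mdp S A Mt R g rho0 \<and>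
        value_distribution S A Z1 \<and> value_distribution S A Z2 \<and>
        (\<forall>p1 p2. greedy h S A Z1 p1 \<longrightarrow> greedy h S A Z2 p2 \<longrightarrow>
           \<not> (supnorm S A (\<lambda>s a. drm h (bellman Mt R g p1 Z1 s a) - drm h (bellman Mt R g p2 Z2 s a))
               \<le> g * supnorm S A (\<lambda>s a. drm h (Z1 s a) - drm h (Z2 s a))))"
proof (intro exI conjI allI impI)
  let ?S = "{0::nat}" and ?A = "{0::nat}" and ?Mt = "\<lambda>s a::nat. 0::nat"
  let ?R = "\<lambda>s a::nat. dm (tp x)" and ?g = "1/2::real"
  let ?Z1 = "\<lambda>s a::nat. dm (tp y)" and ?Z2 = "\<lambda>s a::nat. dm (return_pmf (1 - h y))"
  have fin_tp: "finite (set_pmf (tp z))" if "z \<in> {0..1}" for z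
    using set_tp[OF that] by (rule finite_subset) auto
  show "mdp ?S ?A ?Mt ?R ?g (return_pmf 0)"
    by (auto simp: mdp_def prob_space_dm)
  show "value_distribution ?S ?A ?Z1"
    using value_dist_dm[OF fin_tp[OF y]] by (simp add: value_distribution_def)
  show "value_distribution ?S ?A ?Z2"
    using value_dist_dm[of "return_pmf (1 - h y)"] by (simp add: value_distribution_def)
  fix p1 p2 :: "nat \<Rightarrow> nat"
  have b1: "bellman ?Mt ?R ?g p1 ?Z1 0 0 = dm (pconv (1/2) (tp x) (tp y))"
    by (simp only: bellman_def conv_dm)
  have b2: "bellman ?Mt ?R ?g p2 ?Z2 0 0 = dm (pconv (1/2) (tp x) (return_pmf (1 - h y)))"
    by (simp only: bellman_def conv_dm)
  have l: "supnorm ?S ?A (\<lambda>s a. drm h (bellman ?Mt ?R ?g p1 ?Z1 s a) - drm h (bellman ?Mt ?R ?g p2 ?Z2 s a))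
      = \<bar>(h x + h y - h (x*y) - h (x + y - x*y)) / 2\<bar>"
  proof -
    have e: "(3/2 - h (x*y) / 2 - h x / 2 - h (x + y - x*y) / 2) - (1 + (1 - h y) / 2 - h x)
        = (h x + h y - h (x*y) - h (x + y - x*y)) / 2" by (simp add: field_simps)
    show ?thesis
      unfolding supnorm_single b1 b2 drm_conv_tp[OF h x y] drm_conv_const[OF h x] e ..
  qed
  have r: "supnorm ?S ?A (\<lambda>s a. drm h (?Z1 s a) - drm h (?Z2 s a)) = 0"
    unfolding supnorm_single drm_tp[OF h y] drm_return[OF h] by simp
  show "\<not> (supnorm ?S ?A (\<lambda>s a. drm h (bellman ?Mt ?R ?g p1 ?Z1 s a) - drm h (bellman ?Mt ?R ?g p2 ?Z2 s a))
               \<le> ?g * supnorm ?S ?A (\<lambda>s a. drm h (?Z1 s a) - drm h (?Z2 s a)))"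
    unfolding l r using D by simp
qed



definition Kf :: "real pmf \<Rightarrow> real pmf \<Rightarrow> nat \<Rightarrow> real pmf" where
  "Kf PU PW a = (if a = 0 then PU else PW)"

definition mixp :: "real pmf \<Rightarrow> real pmf \<Rightarrow> real \<Rightarrow> real pmf" where
  "mixp PU PW l = bind_pmf (bernoulli_pmf l) (\<lambda>b. if b then PU else PW)"

lemma pmf_mixp: "l \<in> {0..1} \<Longrightarrow> pmf (mixp PU PW l) v = l * pmf PU v + (1 - l) * pmf PW v"
  by (simp add: mixp_def pmf_bind)

lemma set_mixp: "set_pmf (mixp PU PW l) \<subseteq> set_pmf PU \<union> set_pmf PW"
  by (auto simp: mixp_def split: if_splits)

lemma bind_Kf: "bind_pmf q (Kf PU PW) = mixp PU PW (pmf q 0)"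
proof (rule pmf_eqI)
  fix v
  have "pmf (bind_pmf q (Kf PU PW)) v = (\<integral>a. pmf (Kf PU PW a) v \<partial>measure_pmf q)"
    by (rule pmf_bind)
  also have "\<dots> = (\<integral>a. pmf PW v + (pmf PU v - pmf PW v) * indicator {0} a \<partial>measure_pmf q)"
    by (intro Bochner_Integration.integral_cong) (auto simp: Kf_def indicator_def)
  also have "\<dots> = pmf PW v + (pmf PU v - pmf PW v) * measure (measure_pmf q) {0}"
  proof -
    have i1: "integrable (measure_pmf q) (\<lambda>a. (pmf PU v - pmf PW v) * indicator {0} a)"
      by (intro integrable_mult_right integrable_real_indicator) (auto simp: emeasure_pmf_single)
    show ?thesis
      by (subst Bochner_Integration.integral_add[OF _ i1]) auto
  qed
  also have "\<dots> = pmf (mixp PU PW (pmf q 0)) v"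
    by (simp add: pmf_mixp measure_pmf_single pmf_le_1 algebra_simps)
  finally show "pmf (bind_pmf q (Kf PU PW)) v = pmf (mixp PU PW (pmf q 0)) v" .
qed

lemma cont_mix:
  fixes h :: "real \<Rightarrow> real"
  assumes h: "distortion h" and fR: "finite (set_pmf PR)" and fU: "finite (set_pmf PU)"
    and fW: "finite (set_pmf PW)"
  shows "continuous_on {0..1} (\<lambda>l. drm h (dm (pconv (1/2) PR (mixp PU PW l))))"
proof -
  define VQ where "VQ = set_pmf PU \<union> set_pmf PW"
  define V where "V = (\<lambda>(a,b). a + 1/2 * b) ` (set_pmf PR \<times> VQ)"
  have fVQ: "finite VQ" using fU fW by (simp add: VQ_def)
  have fV: "finite V" using fR fVQ by (simp add: V_def)
  have supp: "set_pmf (pconv (1/2) PR (mixp PU PW l)) \<subseteq> V" for l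
    using set_mixp[of PU PW l] by (auto simp: set_pconv V_def VQ_def)
  define meas where "meas A l = measure (measure_pmf (pconv (1/2) PR (mixp PU PW l))) A" for A l
  have meas_eq: "meas A l = (\<Sum>a\<in>set_pmf PR. \<Sum>b\<in>VQ. pmf PR a * (l * pmf PU b + (1 - l) * pmf PW b)
      * indicator A (a + 1/2 * b))" if "l \<in> {0..1}" for A l
    unfolding meas_def
    by (subst measure_pconv[OF fR subset_refl fVQ]) (auto simp: VQ_def set_mixp pmf_mixp[OF that])
  have cm: "continuous_on {0..1} (meas A)" for A
  proof -
    have "continuous_on {0..1} (\<lambda>l. (\<Sum>a\<in>set_pmf PR. \<Sum>b\<in>VQ. pmf PR a * (l * pmf PU b + (1 - l) * pmf PW b)
      * indicator A (a + 1/2 * b)))"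
      by (intro continuous_intros)
    moreover have "continuous_on {0..1} (meas A) = continuous_on {0..1} (\<lambda>l. (\<Sum>a\<in>set_pmf PR. \<Sum>b\<in>VQ. pmf PR a * (l * pmf PU b + (1 - l) * pmf PW b)
      * indicator A (a + 1/2 * b)))"
      by (rule continuous_on_cong) (auto simp: meas_eq)
    ultimately show ?thesis by simp
  qed
  have hc: "continuous_on {0..1} h" using h by (simp add: distortion_def)
  have chm: "continuous_on {0..1} (\<lambda>l. h (meas A l))" for A
    by (rule continuous_on_compose2[OF hc cm]) (auto simp: meas_def)
  have "continuous_on {0..1} (\<lambda>l. \<Sum>v\<in>V. v * (h (meas {..v} l) - h (meas {..<v} l)))"
    by (intro continuous_intros chm)
  moreover have "drm h (dm (pconv (1/2) PR (mixp PU PW l))) = (\<Sum>v\<in>V. v * (h (meas {..v} l) - h (meas {..<v} l)))"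
    for l
    by (subst drm_dm[OF h fV supp]) (simp add: dsum_def meas_def)
  ultimately show ?thesis by simp
qed



lemma mixp_1: "mixp PU PW 1 = PU"
  by (rule pmf_eqI) (simp add: pmf_mixp)

lemma mixp_0: "mixp PU PW 0 = PW"
  by (rule pmf_eqI) (simp add: pmf_mixp)

lemma finite_set_pconv: "finite (set_pmf P) \<Longrightarrow> finite (set_pmf Q) \<Longrightarrow> finite (set_pmf (pconv g P Q))"
  by (simp add: set_pconv)

lemma part1:
  fixes h :: "real \<Rightarrow> real" and PR PU PW :: "real pmf"
  assumes h: "distortion h" and fR: "finite (set_pmf PR)" and fU: "finite (set_pmf PU)"
    and fW: "finite (set_pmf PW)"
    and UW: "drm h (dm PW) < drm h (dm PU)"
    and RUW: "drm h (dm (pconv (1/2) PR PU)) < drm h (dm (pconv (1/2) PR PW))"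
  shows "\<exists>S A Mt R g rho0 Z0. mdp S A Mt R g rho0 \<and> value_distribution S A Z0 \<and>
        (\<exists>p. optimal h S A Mt R g rho0 p) \<and>
        (\<forall>Zs ps. bellman_iteration h S A Mt R g Z0 Zs ps \<longrightarrow>
           (\<exists>N. \<forall>k\<ge>N. \<not> optimal h S A Mt R g rho0 (\<lambda>s. return_pmf (ps k s))) \<and>
           (\<forall>p. optimal h S A Mt R g rho0 p \<longrightarrow>
              \<not> (\<forall>s\<in>S. \<forall>a\<in>A. (\<lambda>k. drm h (Zs k s a))
                                  \<longlonglongrightarrow> drm h (return_dist Mt R g p s a))))"
proof -
  define S where "S = {0,1,2::nat}"
  define A where "A = {0,1::nat}"
  define Mt where "Mt = (\<lambda>(s::nat) (a::nat). if s = 0 then 1 else (2::nat))"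
  define RR where "RR = (\<lambda>(s::nat) (a::nat). dm (if s = 0 then PR else if s = 1 then Kf PU PW a else return_pmf 0))"
  define g where "g = (1/2::real)"
  define rho0 where "rho0 = return_pmf (0::nat)"
  define Z0 where "Z0 = (\<lambda>(s::nat) (a::nat). if s = 0 then dm (pconv (1/2) PR PU) else RR s a)"
  define F where "F l = drm h (dm (pconv (1/2) PR (mixp PU PW l)))" for l
  have conv: "convolution (dm P) (distr (dm Q) borel (\<lambda>x. g * x)) = dm (pconv (1/2) P Q)" for P Q
    unfolding g_def by (rule conv_dm)
  have Mts: "Mt 0 a = 1" "Mt 1 a = 2" "Mt 2 a = 2" for a by (simp_all add: Mt_def)
  have RRs: "RR 0 a = dm PR" "RR 1 a = dm (Kf PU PW a)" "RR 2 a = dm (return_pmf 0)" for a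
    by (simp_all add: RR_def)
  have T2: "trunc_ret Mt RR g q n 2 = (\<lambda>a. dm (return_pmf 0))" for q n
  proof (induction n)
    case 0 then show ?case by (simp add: RRs fun_eq_iff)
  next
    case (Suc n)
    show ?case
      by (rule ext, simp only: trunc_ret.simps Mts RRs Suc bind_dm bind_pmf_const conv pconv_return0)
  qed
  have T1: "trunc_ret Mt RR g q n 1 = (\<lambda>a. dm (Kf PU PW a))" for q n
  proof (cases n)
    case 0 show ?thesis by (rule ext) (simp only: 0 trunc_ret.simps RRs)
  next
    case (Suc m)
    show ?thesis
      by (rule ext, simp only: Suc trunc_ret.simps Mts RRs T2 bind_dm bind_pmf_const conv pconv_return0)
  qed
  have T0: "trunc_ret Mt RR g q (Suc n) 0 a = dm (pconv (1/2) PR (mixp PU PW (pmf (q 1) 0)))" for q n a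
    by (simp only: trunc_ret.simps Mts RRs T1 bind_dm bind_Kf conv)
  have RD: "return_dist Mt RR g q 0 a = dm (pconv (1/2) PR (mixp PU PW (pmf (q 1) 0)))" for q a
  proof (rule return_dist_eq[where N=1])
    fix n :: nat assume "1 \<le> n"
    then obtain m where nm: "n = Suc m" by (cases n) auto
    show "trunc_ret Mt RR g q n 0 a = dm (pconv (1/2) PR (mixp PU PW (pmf (q 1) 0)))"
      by (simp only: nm T0)
  qed (rule real_distribution_dm)
  have OBJ: "objective h Mt RR g rho0 q = F (pmf (q 1) 0)" for q
    by (simp add: objective_def rho0_def RD F_def)
  have pmf01: "pmf q' 0 \<in> {0..1}" for q' :: "nat pmf" by (simp add: pmf_le_1)
  have F1: "F 1 = drm h (dm (pconv (1/2) PR PU))" by (simp add: F_def mixp_1)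
  have F0: "F 0 = drm h (dm (pconv (1/2) PR PW))" by (simp add: F_def mixp_0)
  obtain l where l: "l \<in> {0..1}" "\<And>l'. l' \<in> {0..1} \<Longrightarrow> F l' \<le> F l"
    using continuous_attains_sup[of "{0..1::real}" F] cont_mix[OF h fR fU fW] unfolding F_def by auto
  define pstar where "pstar s = (if s = 1 then map_pmf (\<lambda>b. if b then 0 else 1::nat) (bernoulli_pmf l) else return_pmf 0)" for s :: nat
  have pol: "policy S A pstar" by (auto simp: policy_def pstar_def A_def)
  have pl: "pmf (pstar 1) 0 = l"
  proof -
    have "(\<lambda>b. if b then 0 else 1::nat) -` {0} = {True}" by (auto split: if_splits)
    then show ?thesis using l(1) by (simp add: pstar_def pmf_map measure_pmf_single)
  qed
  have opt: "optimal h S A Mt RR g rho0 pstar"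
    unfolding optimal_def
  proof (intro conjI allI impI pol)
    fix q assume "policy S A q"
    have "objective h Mt RR g rho0 q = F (pmf (q 1) 0)" by (rule OBJ)
    also have "\<dots> \<le> F l" by (rule l(2)[OF pmf01])
    also have "F l = objective h Mt RR g rho0 pstar" unfolding OBJ pl ..
    finally show "objective h Mt RR g rho0 q \<le> objective h Mt RR g rho0 pstar" .
  qed
  have Wpol: "policy S A (\<lambda>s. return_pmf 1)" by (auto simp: policy_def A_def)
  have OW: "objective h Mt RR g rho0 (\<lambda>s. return_pmf 1) = F 0" unfolding OBJ by simp
  show ?thesis
  proof (intro exI conjI)
    show "mdp S A Mt RR g rho0"
      by (auto simp: mdp_def S_def A_def Mt_def RR_def g_def rho0_def prob_space_dm)
    have fK: "finite (set_pmf (Kf PU PW a))" for a using fU fW by (simp add: Kf_def)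
    show "value_distribution S A Z0"
      unfolding value_distribution_def Z0_def RR_def
      using fR fU fK by (auto intro!: value_dist_dm finite_set_pconv)
    show "optimal h S A Mt RR g rho0 pstar" by (rule opt)
    show "\<forall>Zs ps. bellman_iteration h S A Mt RR g Z0 Zs ps \<longrightarrow>
           (\<exists>N. \<forall>k\<ge>N. \<not> optimal h S A Mt RR g rho0 (\<lambda>s. return_pmf (ps k s))) \<and>
           (\<forall>p. optimal h S A Mt RR g rho0 p \<longrightarrow>
              \<not> (\<forall>s\<in>S. \<forall>a\<in>A. (\<lambda>k. drm h (Zs k s a))
                                  \<longlonglongrightarrow> drm h (return_dist Mt RR g p s a)))"
    proof (intro allI impI)
    fix Zs ps assume it: "bellman_iteration h S A Mt RR g Z0 Zs ps"
    have gr: "greedy h S A (Zs k) (ps k)" for k using it by (simp add: bellman_iteration_def)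
    have psA: "ps k s \<in> A" if "s \<in> S" for k s using gr[of k] that by (simp add: greedy_def)
    have ps1: "ps k 1 = 0" if Zk: "\<forall>s\<in>S. \<forall>a\<in>A. Zs k s a = Z0 s a" for k
    proof (rule ccontr)
      assume "ps k 1 \<noteq> 0"
      then have "ps k 1 = 1" using psA[of 1 k] by (auto simp: S_def A_def)
      moreover have "drm h (Zs k 1 0) \<le> drm h (Zs k 1 (ps k 1))"
        using gr[of k] by (auto simp: greedy_def S_def A_def)
      ultimately have "drm h (dm PU) \<le> drm h (dm PW)"
        using Zk by (auto simp: S_def A_def Z0_def RR_def Kf_def)
      then show False using UW by simp
    qed
    have Z: "\<forall>s\<in>S. \<forall>a\<in>A. Zs k s a = Z0 s a" for k
    proof (induction k)
      case 0 then show ?case using it by (simp add: bellman_iteration_def)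
    next
      case (Suc k)
      have p1: "ps k 1 = 0" by (rule ps1[OF Suc])
      show ?case
      proof (intro ballI)
        fix s a assume s: "s \<in> S" and a: "a \<in> A"
        have MtS: "Mt s a \<in> S" by (auto simp: Mt_def S_def)
        have "Zs (Suc k) s a = bellman Mt RR g (ps k) (Zs k) s a"
          using it s a by (simp add: bellman_iteration_def)
        also have "\<dots> = convolution (RR s a) (distr (Z0 (Mt s a) (ps k (Mt s a))) borel (\<lambda>x. g * x))"
          using Suc MtS psA[OF MtS] by (simp add: bellman_def)
        also have "\<dots> = Z0 s a"
        proof -
          consider "s = 0" | "s = 1" | "s = 2" using s by (auto simp: S_def)
          then show ?thesis
          proof cases
            case 1
            then have "convolution (RR s a) (distr (Z0 (Mt s a) (ps k (Mt s a))) borel (\<lambda>x. g * x))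
              = convolution (dm PR) (distr (dm PU) borel (\<lambda>x. g * x))"
              using p1 by (simp add: Mt_def Z0_def RR_def Kf_def)
            then show ?thesis using 1 by (simp add: conv Z0_def)
          next
            case 2
            then have "convolution (RR s a) (distr (Z0 (Mt s a) (ps k (Mt s a))) borel (\<lambda>x. g * x))
              = convolution (dm (Kf PU PW a)) (distr (dm (return_pmf 0)) borel (\<lambda>x. g * x))"
              by (simp add: Mt_def Z0_def RR_def)
            then show ?thesis using 2 by (simp add: conv pconv_return0 Z0_def RR_def)
          next
            case 3
            then have "convolution (RR s a) (distr (Z0 (Mt s a) (ps k (Mt s a))) borel (\<lambda>x. g * x))
              = convolution (dm (return_pmf 0)) (distr (dm (return_pmf 0)) borel (\<lambda>x. g * x))"
              by (simp add: Mt_def Z0_def RR_def)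
            then show ?thesis using 3 by (simp add: conv pconv_return0 Z0_def RR_def)
          qed
        qed
        finally show "Zs (Suc k) s a = Z0 s a" .
      qed
    qed
    have p1all: "ps k 1 = 0" for k by (rule ps1[OF Z])
    have notopt: "\<not> optimal h S A Mt RR g rho0 (\<lambda>s. return_pmf (ps k s))" for k
    proof
      assume "optimal h S A Mt RR g rho0 (\<lambda>s. return_pmf (ps k s))"
      then have "objective h Mt RR g rho0 (\<lambda>s. return_pmf 1) \<le> objective h Mt RR g rho0 (\<lambda>s. return_pmf (ps k s))"
        using Wpol by (simp add: optimal_def)
      moreover have "objective h Mt RR g rho0 (\<lambda>s. return_pmf (ps k s)) = F 1"
        unfolding OBJ by (simp only: p1all) simp
      ultimately have "F 0 \<le> F 1" using OW by metis
      then show False using RUW F0 F1 by simp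
    qed
    have P1: "\<exists>N. \<forall>k\<ge>N. \<not> optimal h S A Mt RR g rho0 (\<lambda>s. return_pmf (ps k s))" using notopt by blast
    have P2: "\<not> (\<forall>s\<in>S. \<forall>a\<in>A. (\<lambda>k. drm h (Zs k s a)) \<longlonglongrightarrow> drm h (return_dist Mt RR g p s a))"
      if op: "optimal h S A Mt RR g rho0 p" for p
    proof
      assume "\<forall>s\<in>S. \<forall>a\<in>A. (\<lambda>k. drm h (Zs k s a)) \<longlonglongrightarrow> drm h (return_dist Mt RR g p s a)"
      then have "(\<lambda>k. drm h (Zs k 0 0)) \<longlonglongrightarrow> drm h (return_dist Mt RR g p 0 0)"
        by (auto simp: S_def A_def)
      moreover have "drm h (Zs k 0 0) = F 1" for k
        using Z[of k] by (simp add: S_def A_def Z0_def F1)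
      ultimately have "(\<lambda>k. F 1) \<longlonglongrightarrow> F (pmf (p 1) 0)" unfolding RD F_def by simp
      then have e: "F 1 = F (pmf (p 1) 0)" by (simp add: LIMSEQ_const_iff)
      have "objective h Mt RR g rho0 (\<lambda>s. return_pmf 1) \<le> objective h Mt RR g rho0 p"
        using op Wpol by (simp add: optimal_def)
      then have "F 0 \<le> F (pmf (p 1) 0)" unfolding OW OBJ .
      then show False using e RUW F0 F1 by simp
    qed
    show "(\<exists>N. \<forall>k\<ge>N. \<not> optimal h S A Mt RR g rho0 (\<lambda>s. return_pmf (ps k s))) \<and>
           (\<forall>p. optimal h S A Mt RR g rho0 p \<longrightarrow>
              \<not> (\<forall>s\<in>S. \<forall>a\<in>A. (\<lambda>k. drm h (Zs k s a))
                                  \<longlonglongrightarrow> drm h (return_dist Mt RR g p s a)))"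
      using P1 P2 by blast
    qed
  qed
qed



theorem mainTheorem1:
  fixes h :: "real \<Rightarrow> real"
  assumes "distortion h"
    and "\<not> (\<exists>c d. \<forall>\<mu>. value_dist \<mu> \<longrightarrow> drm h \<mu> = c * mean \<mu> + d)"
  shows
    "(\<exists>S A Mt R g rho0 Z0. mdp S A Mt R g rho0 \<and> value_distribution S A Z0 \<and>
        (\<exists>p. optimal h S A Mt R g rho0 p) \<and>
        (\<forall>Zs ps. bellman_iteration h S A Mt R g Z0 Zs ps \<longrightarrow>
           (\<exists>N. \<forall>k\<ge>N. \<not> optimal h S A Mt R g rho0 (\<lambda>s. return_pmf (ps k s))) \<and>
           (\<forall>p. optimal h S A Mt R g rho0 p \<longrightarrow>
              \<not> (\<forall>s\<in>S. \<forall>a\<in>A. (\<lambda>k. drm h (Zs k s a))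
                                  \<longlonglongrightarrow> drm h (return_dist Mt R g p s a)))))
     \<and>
     (\<exists>S A Mt R g rho0 Z1 Z2. mdp S A Mt R g rho0 \<and>
        value_distribution S A Z1 \<and> value_distribution S A Z2 \<and>
        (\<forall>p1 p2. greedy h S A Z1 p1 \<longrightarrow> greedy h S A Z2 p2 \<longrightarrow>
           \<not> (supnorm S A (\<lambda>s a. drm h (bellman Mt R g p1 Z1 s a) - drm h (bellman Mt R g p2 Z2 s a))
               \<le> g * supnorm S A (\<lambda>s a. drm h (Z1 s a) - drm h (Z2 s a)))))"
proof -
  have h: "distortion h" by fact
  have nid: "\<not> (\<forall>u\<in>{0..1}. h u = u)"
    using id_drm_mean[of h] assms(2) by blast
  obtain x y where x: "x \<in> {0..1}" and y: "y \<in> {0..1}"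
    and D: "h x + h y \<noteq> h (x*y) + h (x + y - x*y)"
    using feq_id[OF h] nid by blast
  have fin_tp: "finite (set_pmf (tp z))" if "z \<in> {0..1}" for z
    using set_tp[OF that] by (rule finite_subset) auto
  have fin_ret: "finite (set_pmf (return_pmf c))" for c :: real by simp
  define d where "d = h x + h y - h (x*y) - h (x + y - x*y)"
  define cY where "cY = 1 - h y"
  define c where "c = cY + d / 2"
  have bY: "drm h (dm (tp y)) = cY" unfolding cY_def by (rule drm_tp[OF h y])
  have bc: "drm h (dm (return_pmf c)) = c" by (rule drm_return[OF h])
  have bRY: "drm h (dm (pconv (1/2) (tp x) (tp y))) = 1 + cY/2 - h x + d/2"
    unfolding drm_conv_tp[OF h x y] cY_def d_def by (simp add: field_simps)
  have bRc: "drm h (dm (pconv (1/2) (tp x) (return_pmf c))) = 1 + cY/2 - h x + d/4"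
    unfolding drm_conv_const[OF h x] c_def by (simp add: field_simps)
  have dne: "d \<noteq> 0" using D unfolding d_def by simp
  have P1: "\<exists>S A Mt R g rho0 Z0. mdp S A Mt R g rho0 \<and> value_distribution S A Z0 \<and>
        (\<exists>p. optimal h S A Mt R g rho0 p) \<and>
        (\<forall>Zs ps. bellman_iteration h S A Mt R g Z0 Zs ps \<longrightarrow>
           (\<exists>N. \<forall>k\<ge>N. \<not> optimal h S A Mt R g rho0 (\<lambda>s. return_pmf (ps k s))) \<and>
           (\<forall>p. optimal h S A Mt R g rho0 p \<longrightarrow>
              \<not> (\<forall>s\<in>S. \<forall>a\<in>A. (\<lambda>k. drm h (Zs k s a))
                                  \<longlonglongrightarrow> drm h (return_dist Mt R g p s a))))"
  proof (cases "d > 0")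
    case True
    show ?thesis
    proof (rule part1[OF h fin_tp[OF x] fin_ret fin_tp[OF y]])
      show "drm h (dm (tp y)) < drm h (dm (return_pmf c))" using True unfolding bY bc by (simp add: c_def)
      show "drm h (dm (pconv (1/2) (tp x) (return_pmf c))) < drm h (dm (pconv (1/2) (tp x) (tp y)))"
        using True unfolding bRY bRc by simp
    qed
  next
    case False
    then have dn: "d < 0" using dne by simp
    show ?thesis
    proof (rule part1[OF h fin_tp[OF x] fin_tp[OF y] fin_ret])
      show "drm h (dm (return_pmf c)) < drm h (dm (tp y))" using dn unfolding bY bc by (simp add: c_def)
      show "drm h (dm (pconv (1/2) (tp x) (tp y))) < drm h (dm (pconv (1/2) (tp x) (return_pmf c)))"
        using dn unfolding bRY bRc by simp
    qed
  qed
  show ?thesis using P1 part2[OF h x y D] by blast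
qed


end
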